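(* For every $n\ge1$ and $k\ge0$, the number of words $w\in\mathcal{P}_{n-1}^2(321)$ with $\mathrm{des}(w)=k$ equals the number of $321$-avoiding permutations of $[n]$ with exactly $k$ peaks.
   Context: $\mathfrak{S}_n$ is the set of permutations of $[n]=\{1,\dots,n\}$; $\mathrm{FIX}(\pi)=\{i:\pi(i)=i\}$. A $2$-arrangement of $[n]$ is a pair $(\pi,\phi)$ with $\pi\in\mathfrak{S}_n$ and $\phi:\mathrm{FIX}(\pi)\to\{-1,-2\}$ arbitrary. Its permutation form is obtained from $\pi(1)\cdots\pi(n)$ by replacing $\pi(i)$ with $-1$ for each $i\in\mathrm{FIX}(\pi)$ with $\phi(i)=-1$, then replacing every occurrence of the $j$-th smallest positive letter by $j$ for all $j$. $\mathcal{P}_n^2$ is the set of these permutation forms ($\mathcal{P}_0^2$ consists of the empty word). For an integer word $w=w_1\cdots w_n$, $\mathrm{des}(w)=|\{i\in[n-1]:w_i>w_{i+1}\}|$; $\mathrm{red}(w)$ replaces every occurrence of the $j$-th smallest letter by $j$; $w$ avoids $\sigma\in\mathfrak{S}_3$ if there are no $i_1<i_2<i_3$ with $\mathrm{red}(w_{i_1}w_{i_2}w_{i_3})=\sigma$; $\mathcal{P}_n^2(\sigma)$ is the set of words of $\mathcal{P}_n^2$ avoiding $\sigma$. A peak of a permutation $\pi\in\mathfrak{S}_n$ is an index $i$ with $1<i<n$ and $\pi_{i-1}<\pi_i>\pi_{i+1}$. *)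

theory Defs
  imports "HOL-Combinatorics.Permutations"
begin

definition FIX :: "(nat \<Rightarrow> nat) \<Rightarrow> nat \<Rightarrow> nat set" where
  "FIX \<pi> n = {i \<in> {1..n}. \<pi> i = i}"

definition std_pos :: "int list \<Rightarrow> int list" where
  "std_pos w = map (\<lambda>x. if 0 < x then int (card {y \<in> set w. 0 < y \<and> y \<le> x}) else x) w"

text \<open>Permutation form of the 2-arrangement (pi, phi) of [n].\<close>
definition perm_form :: "nat \<Rightarrow> (nat \<Rightarrow> nat) \<Rightarrow> (nat \<Rightarrow> int) \<Rightarrow> int list" where
  "perm_form n \<pi> \<phi> =
     std_pos (map (\<lambda>i. if i \<in> FIX \<pi> n \<and> \<phi> i = -1 then -1 else int (\<pi> i)) [1..<n+1])"

definition P2 :: "nat \<Rightarrow> int list set" where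
  "P2 n = {perm_form n \<pi> \<phi> | \<pi> \<phi>. \<pi> permutes {1..n} \<and> (\<forall>i \<in> FIX \<pi> n. \<phi> i \<in> {-1, -2})}"

definition des :: "'a::linorder list \<Rightarrow> nat" where
  "des w = card {i. i + 1 < length w \<and> w ! i > w ! (i + 1)}"

definition red :: "'a::linorder list \<Rightarrow> nat list" where
  "red w = map (\<lambda>x. card {y \<in> set w. y \<le> x}) w"

definition avoids :: "'a::linorder list \<Rightarrow> nat list \<Rightarrow> bool" where
  "avoids w \<sigma> \<longleftrightarrow> \<not> (\<exists>i1 i2 i3. i1 < i2 \<and> i2 < i3 \<and> i3 < length w \<and>
                        red [w ! i1, w ! i2, w ! i3] = \<sigma>)"

definition word_of :: "nat \<Rightarrow> (nat \<Rightarrow> nat) \<Rightarrow> nat list" where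
  "word_of n \<pi> = map \<pi> [1..<n+1]"

definition peaks :: "nat \<Rightarrow> (nat \<Rightarrow> nat) \<Rightarrow> nat set" where
  "peaks n \<pi> = {i. 1 < i \<and> i < n \<and> \<pi> (i - 1) < \<pi> i \<and> \<pi> i > \<pi> (i + 1)}"

end

theory Submission
  imports Defs
begin

definition dec3 :: "'a::linorder list \<Rightarrow> bool" where
  "dec3 xs \<longleftrightarrow> (\<exists>i j k. i < j \<and> j < k \<and> k < length xs \<and> xs!i > xs!j \<and> xs!j > xs!k)"

lemma red321: "red [x,y,z::'a::linorder] = [3,2,1] \<longleftrightarrow> x > y \<and> y > z"
proof
  assume h: "red [x,y,z] = [3,2,1]"
  have c: "card {u\<in>{x,y,z}. u \<le> x} = 3" "card {u\<in>{x,y,z}. u \<le> y} = 2" "card {u\<in>{x,y,z}. u \<le> z} = 1"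
    using h by (auto simp: red_def)
  have m: "card {u\<in>{x,y,z}. u \<le> a} \<le> card {u\<in>{x,y,z}. u \<le> b}" if "a \<le> b" for a b
    by (rule card_mono) (use that in auto)
  show "x > y \<and> y > z"
  proof (rule ccontr)
    assume "\<not> (x > y \<and> y > z)"
    then have "x \<le> y \<or> y \<le> z" by auto
    then show False
    proof
      assume "x \<le> y" then show False using m[of x y] c by simp
    next
      assume "y \<le> z" then show False using m[of y z] c by simp
    qed
  qed
next
  assume "x > y \<and> y > z"
  then have "{u\<in>{x,y,z}. u \<le> x} = {x,y,z}" "{u\<in>{x,y,z}. u \<le> y} = {y,z}" "{u\<in>{x,y,z}. u \<le> z} = {z}"
    by auto
  moreover have "x \<noteq> y" "x \<noteq> z" "y \<noteq> z" using \<open>x > y \<and> y > z\<close> by auto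
  ultimately show "red [x,y,z] = [3,2,1]" by (simp add: red_def)
qed

lemma avoids_iff: "avoids w [3,2,1] \<longleftrightarrow> \<not> dec3 w"
proof -
  have "red [w!i1, w!i2, w!i3] = [3,2,1] \<longleftrightarrow> w!i1 > w!i2 \<and> w!i2 > w!i3" for i1 i2 i3
    by (rule red321)
  then show ?thesis unfolding avoids_def dec3_def by presburger
qed

definition rk :: "'a::linorder set \<Rightarrow> 'a \<Rightarrow> nat" where
  "rk S x = card {y\<in>S. y \<le> x}"

lemma rk_less: assumes "finite S" "x \<in> S" "y \<in> S" "x < y" shows "rk S x < rk S y"
  unfolding rk_def
proof (intro psubset_card_mono)
  show "finite {ya \<in> S. ya \<le> y}" using assms by auto
  have "y \<notin> {z \<in> S. z \<le> x}" using assms by auto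
  then show "{y \<in> S. y \<le> x} \<subset> {ya \<in> S. ya \<le> y}" using assms by auto
qed

lemma rk_range: assumes "finite S" "x \<in> S" shows "rk S x \<in> {1..card S}"
proof -
  have "card {y\<in>S. y \<le> x} \<ge> 1" using assms
  proof -
    have "x \<in> {y\<in>S. y \<le> x}" using assms by simp
    moreover have "finite {y\<in>S. y \<le> x}" using assms by simp
    ultimately have "card {y\<in>S. y \<le> x} > 0" using card_gt_0_iff by blast
    then show ?thesis by simp
  qed
  moreover have "card {y\<in>S. y \<le> x} \<le> card S" using assms by (intro card_mono) auto
  ultimately show ?thesis by (simp add: rk_def)
qed

lemma rk_inj: assumes "finite S" shows "inj_on (rk S) S"
proof (rule inj_onI)
  fix x y assume "x \<in> S" "y \<in> S" "rk S x = rk S y"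
  then show "x = y" using rk_less[OF assms, of x y] rk_less[OF assms, of y x]
    by (metis less_irrefl neqE)
qed

lemma rk_bij: assumes "finite S" shows "bij_betw (rk S) S {1..card S}"
proof -
  have i: "rk S ` S \<subseteq> {1..card S}" using rk_range[OF assms] by auto
  have "card (rk S ` S) = card {1..card S}" using card_image[OF rk_inj[OF assms]] by simp
  then have "rk S ` S = {1..card S}" using card_subset_eq[OF _ i] by simp
  then show ?thesis using rk_inj[OF assms] by (simp add: bij_betw_def)
qed

lemma rk_unique:
  assumes "finite S" "bij_betw g S {1..c}" "\<And>x y. x \<in> S \<Longrightarrow> y \<in> S \<Longrightarrow> x < y \<Longrightarrow> g x < g y" "x \<in> S"
  shows "g x = rk S x"
proof -
  have le: "g y \<le> g x \<longleftrightarrow> y \<le> x" if "y \<in> S" for y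
    using assms(3)[of x y] assms(3)[of y x] that assms(4) by (metis leD leI nless_le)
  have inj: "inj_on g S" using assms(2) by (simp add: bij_betw_def)
  have "g ` {y\<in>S. y \<le> x} = {v\<in>g ` S. v \<le> g x}" using le by auto
  also have "\<dots> = {1..g x}" using assms(2,4) bij_betwE[OF assms(2)] by (auto simp: bij_betw_def)
  finally have geq: "g ` {y\<in>S. y \<le> x} = {1..g x}" .
  have "card {y\<in>S. y \<le> x} = g x"
  proof -
    have "inj_on g {y\<in>S. y \<le> x}" using inj by (rule inj_on_subset) auto
    then have "card (g ` {y\<in>S. y \<le> x}) = card {y\<in>S. y \<le> x}" by (rule card_image)
    then show ?thesis using geq by simp
  qed
  then show ?thesis by (simp add: rk_def)
qed


definition goodw :: "int list \<Rightarrow> bool" where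
  "goodw w \<longleftrightarrow> (\<forall>i<length w. w!i = -1 \<or> 0 < w!i) \<and>
     bij_betw (\<lambda>i. nat (w!i)) {i. i<length w \<and> 0 < w!i} {1..card {i. i<length w \<and> 0 < w!i}}"

lemma P2_sub:
  assumes "w \<in> P2 m" shows "length w = m \<and> goodw w"
proof -
  obtain \<pi> \<phi> where pp: "\<pi> permutes {1..m}" and w: "w = perm_form m \<pi> \<phi>"
    using assms unfolding P2_def by blast
  define h where "h i = (if i \<in> FIX \<pi> m \<and> \<phi> i = -1 then -1 else int (\<pi> i))" for i
  define pre where "pre = map h [1..<m+1]"
  define S where "S = {y \<in> set pre. 0 < y}"
  have finS: "finite S" unfolding S_def by auto
  have w2: "w = std_pos pre" unfolding w perm_form_def pre_def h_def by simp
  have lp: "length pre = m" unfolding pre_def by simp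
  have pj: "pre!j = h (Suc j)" if "j < m" for j using that unfolding pre_def by (simp del: upt_Suc)
  have pin: "\<pi> i \<in> {1..m}" if "i \<in> {1..m}" for i by (metis permutes_in_image pp that)
  have pre_cases: "pre!j = -1 \<or> (pre!j = int (\<pi> (Suc j)))" if "j<m" for j
    using pj[OF that] by (auto simp: h_def)
  have std_eq: "card {y \<in> set pre. 0 < y \<and> y \<le> x} = rk S x" for x
    unfolding rk_def S_def by (rule arg_cong[where f=card]) auto
  have wj: "w!j = (if 0 < pre!j then int (rk S (pre!j)) else pre!j)" if "j<m" for j
    using that lp unfolding w2 std_pos_def by (simp add: std_eq)
  have lw: "length w = m" using lp w2 by (simp add: std_pos_def)
  define P where "P = {i. i<length w \<and> 0 < w!i}"
  have rkpos: "0 < rk S x" if "x \<in> S" for x using rk_range[OF finS that] by auto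
  have Peq: "P = {j. j < m \<and> 0 < pre!j}"
  proof -
    have "0 < w!j \<longleftrightarrow> 0 < pre!j" if "j < m" for j
    proof (cases "0 < pre!j")
      case True
      then have "pre!j \<in> S" using that lp by (auto simp: S_def)
      then show ?thesis using wj[OF that] rkpos True by simp
    next
      case False
      then show ?thesis using wj[OF that] by simp
    qed
    then show ?thesis unfolding P_def using lw by auto
  qed
  have b1: "bij_betw (\<lambda>j. pre!j) P S"
  proof (rule bij_betw_imageI)
    show "inj_on (\<lambda>j. pre!j) P"
    proof (rule inj_onI)
      fix x y assume "x \<in> P" "y \<in> P" "pre!x = pre!y"
      then have "x < m" "y < m" "0 < pre!x" "0<pre!y" using Peq by auto
      then have "pre!x = int (\<pi> (Suc x))" "pre!y = int (\<pi> (Suc y))" using pre_cases by fastforce+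
      then have "\<pi> (Suc x) = \<pi> (Suc y)" using \<open>pre!x = pre!y\<close> by simp
      then show "x = y" using permutes_inj[OF pp] by (metis injD nat.inject)
    qed
    show "(\<lambda>j. pre!j) ` P = S" unfolding Peq S_def using lp by (auto simp: in_set_conv_nth)
  qed
  have cSP: "card S = card P" using bij_betw_same_card[OF b1] by simp
  have b2: "bij_betw (rk S \<circ> (\<lambda>j. pre!j)) P {1..card P}"
    using bij_betw_trans[OF b1 rk_bij[OF finS]] cSP by simp
  have b3: "bij_betw (\<lambda>i. nat (w!i)) P {1..card P}"
      proof (rule bij_betw_cong[THEN iffD1, OF _ b2])
    fix x assume "x \<in> P"
    then have "x < m" "0 < pre!x" using Peq by auto
    then show "(rk S \<circ> (\<lambda>j. pre!j)) x = nat (w!x)" using wj[of x] by simp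
  qed
  have "\<forall>i<length w. w!i = -1 \<or> 0 < w!i"
  proof (intro allI impI)
    fix i assume "i < length w"
    then have im: "i < m" using lw by simp
    show "w!i = -1 \<or> 0 < w!i"
    proof (cases "0 < pre!i")
      case True
      then have "pre!i \<in> S" using im lp by (auto simp: S_def)
      then show ?thesis using wj[OF im] rkpos True by simp
    next
      case False
      have "1 \<le> \<pi> (Suc i)" using pin[of "Suc i"] im by simp
      then have "pre!i = -1" using pre_cases[OF im] False by auto
      then show ?thesis using wj[OF im] by simp
    qed
  qed
  then show ?thesis using b3 lw unfolding goodw_def P_def by simp
qed


lemma P2_sup:
  assumes lw: "length w = m" and gw: "goodw w" shows "w \<in> P2 m"
proof -
  define P where "P = {i. i<m \<and> 0 < w!i}"
  have wv: "w!i = -1 \<or> 0 < w!i" if "i < m" for i using gw lw that by (simp add: goodw_def)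
  have bP: "bij_betw (\<lambda>i. nat (w!i)) P {1..card P}" using gw lw by (simp add: goodw_def P_def)
  define G where "G = Suc ` P"
  have finG: "finite G" unfolding G_def P_def by simp
  have cG: "card G = card P" unfolding G_def by (simp add: card_image)
  have GS: "G \<subseteq> {1..m}" unfolding G_def P_def by auto
  have bS: "bij_betw (\<lambda>i. i - 1) G P"
    unfolding G_def by (rule bij_betw_imageI) (auto simp: inj_on_def image_image)
  have bG: "bij_betw (\<lambda>i. nat (w!(i-1))) G {1..card G}"
    using bij_betw_trans[OF bS bP] cG by (simp add: comp_def)
  define e where "e = inv_into G (rk G)"
  have be: "bij_betw e {1..card G} G" unfolding e_def by (rule bij_betw_inv_into[OF rk_bij[OF finG]])
  define \<pi> where "\<pi> i = (if i \<in> G then e (nat (w!(i-1))) else i)" for i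
  have bpG: "bij_betw \<pi> G G"
    by (rule bij_betw_cong[THEN iffD1, OF _ bij_betw_trans[OF bG be]]) (simp add: \<pi>_def)
  have bid: "bij_betw id ({1..m} - G) ({1..m} - G)" by simp
  have bU: "bij_betw (\<lambda>x. if x \<in> G then \<pi> x else id x) (G \<union> ({1..m} - G)) (G \<union> ({1..m} - G))"
    by (rule bij_betw_disjoint_Un[OF bpG bid]) auto
  have U: "G \<union> ({1..m} - G) = {1..m}" using GS by auto
  have bpi: "bij_betw \<pi> {1..m} {1..m}"
    by (rule bij_betw_cong[THEN iffD1, OF _ bU[unfolded U]]) (simp add: \<pi>_def)
  have pp: "\<pi> permutes {1..m}"
    by (rule bij_imp_permutes[OF bpi]) (use GS in \<open>auto simp: \<pi>_def\<close>)
  define \<phi> where "\<phi> i = (if i \<in> G then -2 else -1::int)" for i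
  define h where "h i = (if i \<in> FIX \<pi> m \<and> \<phi> i = -1 then -1 else int (\<pi> i))" for i
  define pre where "pre = map h [1..<m+1]"
  have pf: "perm_form m \<pi> \<phi> = std_pos pre" unfolding perm_form_def pre_def h_def by simp
  have hG: "h i = int (\<pi> i)" if "i \<in> G" for i using that by (simp add: h_def \<phi>_def)
  have hF: "h i = -1" if "i \<in> {1..m}" "i \<notin> G" for i
    using that by (simp add: h_def \<phi>_def FIX_def \<pi>_def)
  have piG: "\<pi> ` G = G" using bpG by (simp add: bij_betw_def)
  have setpre: "set pre = h ` {1..m}" unfolding pre_def by auto
  have posS: "{y \<in> set pre. 0 < y} = int ` G"
  proof -
    have "{y \<in> h ` {1..m}. 0 < y} = h ` G"
    proof
      show "{y \<in> h ` {1..m}. 0 < y} \<subseteq> h ` G" using hF by force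
      show "h ` G \<subseteq> {y \<in> h ` {1..m}. 0 < y}"
      proof
        fix y assume "y \<in> h ` G"
        then obtain i where i: "i \<in> G" "y = h i" by auto
        then have "\<pi> i \<in> G" using piG by auto
        then have "\<pi> i \<ge> 1" using GS by auto
        have "i \<in> {1..m}" using i GS by auto
        then have "h i \<in> h ` {1..m}" by (rule imageI)
        moreover have "0 < h i" using hG[OF i(1)] \<open>\<pi> i \<ge> 1\<close> by simp
        ultimately show "y \<in> {y \<in> h ` {1..m}. 0 < y}" using i by simp
      qed
    qed
    also have "h ` G = int ` \<pi> ` G" using hG by (auto simp: image_image)
    finally show ?thesis using setpre piG by simp
  qed
  have "std_pos pre = w"
  proof (rule nth_equalityI)
    show "length (std_pos pre) = length w" using lw by (simp add: std_pos_def pre_def)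
    fix j assume "j < length (std_pos pre)"
    then have jm: "j < m" by (simp add: std_pos_def pre_def del: upt_Suc)
    have prej: "pre!j = h (Suc j)" using jm unfolding pre_def by (simp del: upt_Suc)
    have sj: "std_pos pre ! j = (if 0 < pre!j then int (card {y \<in> set pre. 0 < y \<and> y \<le> pre!j}) else pre!j)"
      using jm by (simp add: std_pos_def pre_def del: upt_Suc)
    show "std_pos pre ! j = w ! j"
    proof (cases "0 < w!j")
      case True
      then have jG: "Suc j \<in> G" using jm by (simp add: G_def P_def)
      have ev: "nat (w!j) \<in> {1..card G}" using bij_betwE[OF bG] jG by fastforce
      have pe: "\<pi> (Suc j) = e (nat (w!j))" using jG by (simp add: \<pi>_def)
      have peG: "\<pi> (Suc j) \<in> G" using piG jG by auto
      have rke: "rk G (\<pi> (Suc j)) = nat (w!j)"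
        unfolding pe e_def by (rule bij_betw_inv_into_right[OF rk_bij[OF finG] ev])
      have pos: "0 < pre!j" using prej hG[OF jG] peG GS by auto
      have "{y \<in> set pre. 0 < y \<and> y \<le> pre!j} = {y \<in> {y \<in> set pre. 0 < y}. y \<le> pre!j}" by auto
      also have "\<dots> = {y \<in> int ` G. y \<le> int (\<pi> (Suc j))}" using posS prej hG[OF jG] by simp
      also have "\<dots> = int ` {g \<in> G. g \<le> \<pi> (Suc j)}" by auto
      finally have "{y \<in> set pre. 0 < y \<and> y \<le> pre!j} = int ` {g \<in> G. g \<le> \<pi> (Suc j)}" .
      then have "card {y \<in> set pre. 0 < y \<and> y \<le> pre!j} = rk G (\<pi> (Suc j))"
        by (simp add: card_image rk_def)
      then show ?thesis using sj pos rke True by simp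
    next
      case False
      then have "w!j = -1" using wv jm by auto
      moreover have "Suc j \<notin> G" using False by (auto simp: G_def P_def)
      ultimately show ?thesis using sj prej hF[of "Suc j"] jm by simp
    qed
  qed
  moreover have "\<forall>i \<in> FIX \<pi> m. \<phi> i \<in> {-1, -2}" by (simp add: \<phi>_def)
  ultimately have "w = perm_form m \<pi> \<phi> \<and> \<pi> permutes {1..m} \<and> (\<forall>i\<in>FIX \<pi> m. \<phi> i \<in> {- 1, - 2})"
    using pp pf by simp
  then show ?thesis unfolding P2_def by blast
qed


definition fm :: "nat \<Rightarrow> nat \<Rightarrow> int" where
  "fm a x = (if x < a then -1 else int x - int a)"

definition SI :: "nat \<Rightarrow> nat list \<Rightarrow> bool" where
  "SI a t \<longleftrightarrow> (\<forall>i j. i < j \<and> j < length t \<and> t!i < a \<and> t!j < a \<longrightarrow> t!i < t!j)"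

lemma fm_less: "fm a x > fm a y \<Longrightarrow> x > y"
  unfolding fm_def by (auto split: if_splits)

lemma des_eq:
  assumes "SI a t" "a \<notin> set t"
  shows "des (map (fm a) t) = des t"
proof -
  have "(map (fm a) t)!i > (map (fm a) t)!(i+1) \<longleftrightarrow> t!i > t!(i+1)" if "i + 1 < length t" for i
  proof -
    have ne: "t!i \<noteq> a" "t!(i+1) \<noteq> a" using assms(2) that by (auto dest: nth_mem)
    have si: "t!i < a \<Longrightarrow> t!(i+1) < a \<Longrightarrow> t!i < t!(i+1)" using assms(1) that unfolding SI_def by auto
    show ?thesis using that ne si by (auto simp: fm_def)
  qed
  then show ?thesis unfolding des_def by (metis (no_types, lifting) length_map)
qed

lemma dec3_eq:
  assumes "SI a t" "a \<notin> set t"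
  shows "dec3 (a # t) \<longleftrightarrow> dec3 (map (fm a) t)"
proof
  assume "dec3 (map (fm a) t)"
  then obtain i j k where ijk: "i < j" "j < k" "k < length t"
    "fm a (t!i) > fm a (t!j)" "fm a (t!j) > fm a (t!k)" unfolding dec3_def by auto
  then have "t!i > t!j" "t!j > t!k" using fm_less by auto
  then have "(a#t)!(Suc i) > (a#t)!(Suc j) \<and> (a#t)!(Suc j) > (a#t)!(Suc k)" by simp
  then show "dec3 (a # t)" unfolding dec3_def using ijk
    by (intro exI[of _ "Suc i"] exI[of _ "Suc j"] exI[of _ "Suc k"]) simp
next
  assume "dec3 (a # t)"
  then obtain i j k where ijk: "i < j" "j < k" "k < Suc (length t)"
    "(a#t)!i > (a#t)!j" "(a#t)!j > (a#t)!k" unfolding dec3_def by auto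
  obtain j' k' where jk: "j = Suc j'" "k = Suc k'" using ijk by (metis less_imp_Suc_add)
  have ne: "x \<noteq> a" if "x \<in> set t" for x using assms(2) that by auto
  have tj: "t!j' \<noteq> a" "t!k' \<noteq> a" using ne jk ijk by auto
  have si: "\<not> (t!j' < a \<and> t!k' < a \<and> t!j' > t!k')"
    using assms(1) jk ijk unfolding SI_def by (metis Suc_less_SucD less_asym less_trans_Suc)
  show "dec3 (map (fm a) t)"
  proof (cases i)
    case 0
    then show ?thesis using ijk jk si by simp
  next
    case (Suc i')
    have ti: "t!i' > t!j'" "t!j' > t!k'" using ijk Suc jk by auto
    have ja: "t!j' > a" using si ti tj by auto
    then have "fm a (t!i') > fm a (t!j')" "fm a (t!j') > fm a (t!k')"
      using ti ja tj by (auto simp: fm_def)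
    then show ?thesis unfolding dec3_def using ijk Suc jk
      by (intro exI[of _ i'] exI[of _ j'] exI[of _ k']) simp
  qed
qed

lemma SI_of:
  assumes "distinct (a # t)" "\<not> dec3 (a # t)" shows "SI a t"
  unfolding SI_def
proof (intro allI impI)
  fix i j assume h: "i < j \<and> j < length t \<and> t!i < a \<and> t!j < a"
  have "t!i \<noteq> t!j" using assms(1) h by (simp add: nth_eq_iff_index_eq)
  moreover have "\<not> (t!i > t!j)"
  proof
    assume "t!i > t!j"
    then have "(a#t)!0 > (a#t)!(Suc i) \<and> (a#t)!(Suc i) > (a#t)!(Suc j)" using h by simp
    then show False using assms(2) h unfolding dec3_def
      by (metis Suc_less_eq length_Cons zero_less_Suc)
  qed
  ultimately show "t!i < t!j" by simp
qed


definition Phi :: "nat list \<Rightarrow> int list" where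
  "Phi xs = map (fm (hd xs)) (tl xs)"

definition FF :: "int list \<Rightarrow> nat set" where
  "FF w = {j. j < length w \<and> w!j = -1}"

definition Psi :: "int list \<Rightarrow> nat list" where
  "Psi w = (card (FF w) + 1) # map (\<lambda>j. if j \<in> FF w then rk (FF w) j else nat (w!j) + card (FF w) + 1) [0..<length w]"

definition AL :: "nat \<Rightarrow> nat \<Rightarrow> nat list set" where
  "AL n k = {xs. length xs = n \<and> distinct xs \<and> set xs = {1..n} \<and> \<not> dec3 xs \<and> des (tl xs) = k}"

definition AW :: "nat \<Rightarrow> nat \<Rightarrow> int list set" where
  "AW n k = {w. length w = n - 1 \<and> goodw w \<and> \<not> dec3 w \<and> des w = k}"

lemma Phi_in:
  assumes "xs \<in> AL n k" "1 \<le> n" shows "Phi xs \<in> AW n k"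
proof -
  have n1: "length xs = n" "distinct xs" "set xs = {1..n}" "\<not> dec3 xs" "des (tl xs) = k"
    using assms by (auto simp: AL_def)
  then have "xs \<noteq> []" using assms by auto
  then obtain a t where xs: "xs = a # t" by (cases xs) auto
  have an: "a \<notin> set t" "distinct t" using n1 xs by auto
  have st: "set t = {1..n} - {a}" using n1 xs an by auto
  have si: "SI a t" using SI_of n1 xs by simp
  have ph: "Phi xs = map (fm a) t" by (simp add: Phi_def xs)
  have lt: "length t = n - 1" using n1 xs by simp
  define w where "w = map (fm a) t"
  define P where "P = {j. j < length w \<and> 0 < w!j}"
  have Peq: "P = {j. j < length t \<and> a < t!j}"
  proof -
    have "t!j \<noteq> a" if "j < length t" for j using an(1) that nth_mem by metis
    then show ?thesis unfolding P_def w_def fm_def by (auto split: if_splits)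
  qed
  have b1: "bij_betw (\<lambda>j. t!j) P {a<..n}"
  proof (rule bij_betw_imageI)
    show "inj_on (\<lambda>j. t!j) P" unfolding Peq inj_on_def using an(2) by (simp add: nth_eq_iff_index_eq)
    show "(\<lambda>j. t!j) ` P = {a<..n}"
    proof
      show "(\<lambda>j. t!j) ` P \<subseteq> {a<..n}"
      proof
        fix y assume "y \<in> (\<lambda>j. t!j) ` P"
        then obtain j where j: "j < length t" "a < t!j" "y = t!j" unfolding Peq by auto
        then have "t!j \<in> set t" by simp
        then show "y \<in> {a<..n}" using j st by auto
      qed
      show "{a<..n} \<subseteq> (\<lambda>j. t!j) ` P"
      proof
        fix x assume x: "x \<in> {a<..n}"
        then have "x \<in> set t" using st by auto
        then obtain j where "j < length t" "t!j = x" by (auto simp: in_set_conv_nth)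
        then show "x \<in> (\<lambda>j. t!j) ` P" unfolding Peq using x by auto
      qed
    qed
  qed
  have b2: "bij_betw (\<lambda>x. x - a) {a<..n} {1..n-a}"
  proof (rule bij_betw_byWitness[where f'="\<lambda>y. y + a"])
    show "(\<lambda>x. x - a) ` {a<..n} \<subseteq> {1..n - a}" by auto
    show "(\<lambda>y. y + a) ` {1..n - a} \<subseteq> {a<..n}" by auto
  qed auto
  have cP: "card P = n - a" using bij_betw_same_card[OF b1] by simp
  have b3': "bij_betw (\<lambda>i. nat (w!i)) P {1..n-a}"
  proof (rule bij_betw_cong[THEN iffD1, OF _ bij_betw_trans[OF b1 b2]])
    fix j assume "j \<in> P"
    then have "j < length t" "a < t!j" using Peq by auto
    then show "((\<lambda>x. x - a) \<circ> (\<lambda>j. t!j)) j = nat (w!j)" by (simp add: w_def fm_def)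
  qed
  have b3: "bij_betw (\<lambda>i. nat (w!i)) P {1..card P}" using b3' cP by simp
  have "\<forall>i<length w. w!i = -1 \<or> 0 < w!i"
  proof (intro allI impI)
    fix i assume "i < length w"
    then have i: "i < length t" by (simp add: w_def)
    then have "t!i \<noteq> a" using an(1) nth_mem by metis
    then show "w!i = -1 \<or> 0 < w!i" using i by (cases "t!i < a") (auto simp: w_def fm_def)
  qed
  then have gw: "goodw w" using b3 unfolding goodw_def P_def by simp
  have "\<not> dec3 w" using dec3_eq[OF si an(1)] n1 xs w_def by simp
  moreover have "des w = k" using des_eq[OF si an(1)] n1 xs w_def by simp
  ultimately show ?thesis using gw lt ph w_def by (simp add: AW_def)
qed


lemma Psi_props:
  assumes "w \<in> AW n k" "1 \<le> n" shows "Psi w \<in> AL n k \<and> Phi (Psi w) = w"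
proof -
  have lw: "length w = n - 1" and gw: "goodw w" and nd: "\<not> dec3 w" and dw: "des w = k"
    using assms by (auto simp: AW_def)
  define F where "F = FF w"
  define P where "P = {i. i<length w \<and> 0 < w!i}"
  define c where "c = card F"
  define a where "a = c + 1"
  define tf where "tf j = (if j \<in> F then rk F j else nat (w!j) + a)" for j
  define t where "t = map tf [0..<length w]"
  have Psi: "Psi w = a # t" unfolding Psi_def t_def tf_def a_def c_def F_def by (simp add: add.assoc)
  have wv: "w!i = -1 \<or> 0 < w!i" if "i < length w" for i using gw that by (simp add: goodw_def)
  have bP: "bij_betw (\<lambda>i. nat (w!i)) P {1..card P}" using gw by (simp add: goodw_def P_def)
  have finF: "finite F" by (simp add: F_def FF_def)
  have FP: "F \<union> P = {..<length w}" "F \<inter> P = {}" using wv by (auto simp: F_def FF_def P_def)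
  have cFP: "c + card P = n - 1"
    using card_Un_disjoint[of F P] FP finF lw by (simp add: c_def P_def)
  have lt: "length t = n - 1" using lw by (simp add: t_def)
  have tn: "t!j = tf j" if "j < length w" for j using that by (simp add: t_def)
  have rkF: "rk F j \<in> {1..c}" if "j \<in> F" for j using rk_range[OF finF that] by (simp add: c_def)
  have setT: "set t = {1..n} - {a}"
  proof -
    have s1: "set t = tf ` {..<length w}" by (auto simp: t_def)
    have s2: "tf ` {..<length w} = tf ` F \<union> tf ` P" using FP(1) by (simp add: image_Un[symmetric])
    have s3: "tf ` F = rk F ` F" by (rule image_cong) (simp_all add: tf_def)
    have s4: "rk F ` F = {1..c}" using bij_betw_imp_surj_on[OF rk_bij[OF finF]] by (simp add: c_def)
    have s5: "tf ` P = (\<lambda>i. nat (w!i) + a) ` P"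
      by (rule image_cong) (use FP(2) in \<open>auto simp: tf_def\<close>)
    have s6: "(\<lambda>i. nat (w!i) + a) ` P = (\<lambda>x. x + a) ` ((\<lambda>i. nat (w!i)) ` P)" by (simp add: image_image)
    have s7: "(\<lambda>i. nat (w!i)) ` P = {1..card P}" using bij_betw_imp_surj_on[OF bP] .
    have s8: "(\<lambda>x. x + a) ` {1..card P} = {1+a..card P + a}" by simp
    have st: "set t = {1..c} \<union> {1+a..card P + a}" using s1 s2 s3 s4 s5 s6 s7 s8 by simp
    have "card P + a = n" using cFP assms(2) by (simp add: a_def)
    then show ?thesis unfolding st by (auto simp: a_def)
  qed
  have ain: "a \<in> {1..n}" using cFP assms(2) by (simp add: a_def)
  have setX: "set (a # t) = {1..n}" using setT insert_Diff[OF ain] by simp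
  have dX: "distinct (a # t)"
    by (rule card_distinct) (use setX lt assms(2) in simp)
  have anot: "a \<notin> set t" using setT by simp
  have si: "SI a t" unfolding SI_def
  proof (intro allI impI)
    fix i j assume h: "i < j \<and> j < length t \<and> t!i < a \<and> t!j < a"
    then have "i \<in> F" "j \<in> F" using tn lt lw by (auto simp: tf_def split: if_splits)
    then show "t!i < t!j" using h tn lt lw rk_less[OF finF] by (auto simp: tf_def)
  qed
  have phi: "map (fm a) t = w"
  proof (rule nth_equalityI)
    show "length (map (fm a) t) = length w" using lt lw by simp
    fix j assume "j < length (map (fm a) t)"
    then have j: "j < length w" using lt lw by simp
    show "map (fm a) t ! j = w ! j"
    proof (cases "j \<in> F")
      case True
      have tj: "t!j = rk F j" using tn[OF j] True by (simp add: tf_def)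
      have wj: "w!j = -1" using True by (simp add: F_def FF_def)
      have "rk F j < a" using rkF[OF True] by (simp add: a_def)
      then have "fm a (t!j) = -1" using tj by (simp add: fm_def)
      then show ?thesis using j lt lw wj by simp
    next
      case False
      then have "0 < w!j" using wv j by (auto simp: F_def FF_def)
      have tj: "t!j = nat (w!j) + a" using tn[OF j] False by (simp add: tf_def)
      then have "fm a (t!j) = w!j" using \<open>0 < w!j\<close> by (simp add: fm_def)
      then show ?thesis using j lt lw by simp
    qed
  qed
  have PP: "Phi (Psi w) = w" using phi Psi by (simp add: Phi_def)
  have "\<not> dec3 (a # t)" using dec3_eq[OF si anot] phi nd by simp
  moreover have "des t = k" using des_eq[OF si anot] phi dw by simp
  ultimately have "Psi w \<in> AL n k" using Psi setX dX lt assms(2) by (simp add: AL_def)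
  then show ?thesis using PP by simp
qed


lemma Psi_Phi:
  assumes "xs \<in> AL n k" "1 \<le> n" shows "Psi (Phi xs) = xs"
proof -
  have n1: "length xs = n" "distinct xs" "set xs = {1..n}" "\<not> dec3 xs"
    using assms by (auto simp: AL_def)
  then have "xs \<noteq> []" using assms by auto
  then obtain a t where xs: "xs = a # t" by (cases xs) auto
  have an: "a \<notin> set t" "distinct t" using n1 xs by auto
  have st: "set t = {1..n} - {a}" using n1 xs an by auto
  have a1: "1 \<le> a" "a \<le> n" using n1 xs by auto
  have si: "SI a t" using SI_of n1 xs by simp
  define w where "w = map (fm a) t"
  have ph: "Phi xs = w" by (simp add: Phi_def xs w_def)
  define F where "F = FF w"
  have Feq: "F = {j. j < length t \<and> t!j < a}"
  proof -
    have "t!j \<noteq> a" if "j < length t" for j using an(1) that nth_mem by metis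
    then show ?thesis unfolding F_def FF_def w_def fm_def by (auto split: if_splits)
  qed
  have finF: "finite F" by (simp add: Feq)
  have b1: "bij_betw (\<lambda>j. t!j) F {1..a-1}"
  proof (rule bij_betw_imageI)
    show "inj_on (\<lambda>j. t!j) F" unfolding Feq inj_on_def using an(2) by (simp add: nth_eq_iff_index_eq)
    show "(\<lambda>j. t!j) ` F = {1..a-1}"
    proof
      show "(\<lambda>j. t!j) ` F \<subseteq> {1..a-1}"
      proof
        fix y assume "y \<in> (\<lambda>j. t!j) ` F"
        then obtain j where j: "j < length t" "t!j < a" "y = t!j" unfolding Feq by auto
        then have "t!j \<in> set t" by simp
        then show "y \<in> {1..a-1}" using j st by auto
      qed
      show "{1..a-1} \<subseteq> (\<lambda>j. t!j) ` F"
      proof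
        fix x assume x: "x \<in> {1..a-1}"
        then have xa: "x < a" "1 \<le> x" using a1 by auto
        then have "x \<in> set t" using st a1 by auto
        then obtain j where j: "j < length t" "t!j = x" by (auto simp: in_set_conv_nth)
        then have "j \<in> F" unfolding Feq using xa by simp
        then have "t!j \<in> (\<lambda>j. t!j) ` F" by (rule imageI)
        then show "x \<in> (\<lambda>j. t!j) ` F" using j(2) by simp
      qed
    qed
  qed
  have cF: "card F + 1 = a" using bij_betw_same_card[OF b1] a1 by simp
  have rkeq: "t!j = rk F j" if "j \<in> F" for j
  proof (rule rk_unique[OF finF b1 _ that])
    fix x y assume "x \<in> F" "y \<in> F" "x < y"
    then show "t!x < t!y" using si unfolding SI_def Feq by auto
  qed
  have "map (\<lambda>j. if j \<in> F then rk F j else nat (w!j) + card F + 1) [0..<length w] = map (\<lambda>j. t!j) [0..<length t]"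
  proof (rule map_cong)
    show "[0..<length w] = [0..<length t]" by (simp add: w_def)
    fix j assume "j \<in> set [0..<length t]"
    then have j: "j < length t" by simp
    show "(if j \<in> F then rk F j else nat (w!j) + card F + 1) = t!j"
    proof (cases "j \<in> F")
      case True then show ?thesis using rkeq by simp
    next
      case False
      then have "t!j \<ge> a" using Feq j by auto
      then show ?thesis using False j cF by (simp add: w_def fm_def)
    qed
  qed
  then have mt: "map (\<lambda>j. if j \<in> F then rk F j else nat (w!j) + card F + 1) [0..<length w] = t"
    by (simp add: map_nth)
  have "Psi w = (card F + 1) # map (\<lambda>j. if j \<in> F then rk F j else nat (w!j) + card F + 1) [0..<length w]"
    unfolding Psi_def F_def by (rule refl)
  also have "\<dots> = a # t" by (simp only: mt cF)
  finally show ?thesis using ph xs by simp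
qed

lemma bij_Phi: assumes "1 \<le> n" shows "bij_betw Phi (AL n k) (AW n k)"
proof (rule bij_betw_byWitness[where f'=Psi])
  show "\<forall>xs\<in>AL n k. Psi (Phi xs) = xs" using Psi_Phi assms by blast
  show "\<forall>w\<in>AW n k. Phi (Psi w) = w" using Psi_props assms by blast
  show "Phi ` AL n k \<subseteq> AW n k" using Phi_in assms by blast
  show "Psi ` AW n k \<subseteq> AL n k" using Psi_props assms by blast
qed

lemma word_of_nth: "j < n \<Longrightarrow> word_of n \<pi> ! j = \<pi> (Suc j)"
  by (simp add: word_of_def del: upt_Suc)

lemma peaks_des:
  assumes "length xs = n" "distinct xs" "\<not> dec3 xs" "\<And>i. i \<in> {1..n} \<Longrightarrow> \<pi> i = xs!(i-1)"
  shows "card (peaks n \<pi>) = des (tl xs)"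
proof -
  define D where "D = {j. j + 1 < length (tl xs) \<and> tl xs!j > tl xs!(j+1)}"
  have tl1: "tl xs ! j = xs!(j+1)" if "j + 1 < n" for j using that assms(1) by (simp add: nth_tl)
  have ltl: "length (tl xs) = n - 1" using assms(1) by simp
  have "peaks n \<pi> = (\<lambda>j. j + 2) ` D"
  proof
    show "peaks n \<pi> \<subseteq> (\<lambda>j. j + 2) ` D"
    proof
      fix i assume "i \<in> peaks n \<pi>"
      then have i: "1 < i" "i < n" "\<pi> (i-1) < \<pi> i" "\<pi> i > \<pi> (i+1)" by (auto simp: peaks_def)
      define j where "j = i - 2"
      have ij: "i = j + 2" using i(1) by (simp add: j_def)
      have p1: "\<pi> i = xs!(j+1)" using assms(4)[of i] i ij by simp
      have p2: "\<pi> (i+1) = xs!(j+2)" using assms(4)[of "i+1"] i ij by simp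
      have t1: "tl xs ! j = xs!(j+1)" using tl1[of j] i ij by simp
      have t2: "tl xs ! (j+1) = xs!(j+2)" using tl1[of "j+1"] i ij by simp
      have "j + 1 < length (tl xs)" using ltl i ij by simp
      then have "j \<in> D" unfolding D_def using t1 t2 p1 p2 i(4) by simp
      then show "i \<in> (\<lambda>j. j + 2) ` D" using ij by blast
    qed
    show "(\<lambda>j. j + 2) ` D \<subseteq> peaks n \<pi>"
    proof
      fix i assume "i \<in> (\<lambda>j. j + 2) ` D"
      then obtain j where j: "j \<in> D" "i = j + 2" by auto
      have "j + 1 < length (tl xs)" using j(1) by (simp add: D_def)
      then have jn: "j + 2 < n" using ltl by simp
      have t1: "tl xs ! j = xs!(j+1)" using tl1[of j] jn by simp
      have t2: "tl xs ! (j+1) = xs!(j+2)" using tl1[of "j+1"] jn by simp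
      have dd: "xs!(j+1) > xs!(j+2)" using j(1) t1 t2 by (simp add: D_def)
      have "xs!j \<noteq> xs!(j+1)" using assms(1,2) jn by (simp add: nth_eq_iff_index_eq)
      moreover have "\<not> (xs!j > xs!(j+1))"
      proof
        assume h: "xs!j > xs!(j+1)"
        have "dec3 xs" unfolding dec3_def
          by (intro exI[of _ j] exI[of _ "j+1"] exI[of _ "j+2"]) (use h dd jn assms(1) in simp)
        then show False using assms(3) by simp
      qed
      ultimately have lt: "xs!j < xs!(j+1)" by simp
      have q1: "\<pi> (i-1) = xs!j" using assms(4)[of "j+1"] j jn by simp
      have q2: "\<pi> i = xs!(j+1)" using assms(4)[of "j+2"] j jn by simp
      have q3: "\<pi> (i+1) = xs!(j+2)" using assms(4)[of "i+1"] j jn by simp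
      show "i \<in> peaks n \<pi>" unfolding peaks_def using q1 q2 q3 lt dd j(2) jn by simp
    qed
  qed
  then have "card (peaks n \<pi>) = card D" by (simp add: card_image inj_on_def)
  then show ?thesis by (simp add: D_def des_def)
qed

definition pinv :: "nat \<Rightarrow> nat list \<Rightarrow> nat \<Rightarrow> nat" where
  "pinv n xs = (\<lambda>i. if i \<in> {1..n} then xs!(i-1) else i)"

lemma word_pinv: assumes "length xs = n" shows "word_of n (pinv n xs) = xs"
proof (rule nth_equalityI)
  show "length (word_of n (pinv n xs)) = length xs" using assms by (simp add: word_of_def)
  fix j assume "j < length (word_of n (pinv n xs))"
  then have j: "j < n" by (simp add: word_of_def del: upt_Suc)
  then have "word_of n (pinv n xs) ! j = pinv n xs (Suc j)" by (rule word_of_nth)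
  also have "\<dots> = xs!j" using j by (simp add: pinv_def)
  finally show "word_of n (pinv n xs) ! j = xs!j" .
qed

lemma pinv_word: assumes "\<pi> permutes {1..n}" shows "pinv n (word_of n \<pi>) = \<pi>"
proof
  fix i show "pinv n (word_of n \<pi>) i = \<pi> i"
  proof (cases "i \<in> {1..n}")
    case True
    then have "i - 1 < n" "Suc (i - 1) = i" by auto
    then have "word_of n \<pi> ! (i-1) = \<pi> i" using word_of_nth[of "i-1" n \<pi>] by simp
    then show ?thesis using True by (simp add: pinv_def)
  next
    case False
    then show ?thesis using permutes_not_in[OF assms False] unfolding pinv_def by auto
  qed
qed

lemma word_props: assumes "\<pi> permutes {1..n}"
  shows "length (word_of n \<pi>) = n" "distinct (word_of n \<pi>)" "set (word_of n \<pi>) = {1..n}"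
    "\<And>i. i \<in> {1..n} \<Longrightarrow> \<pi> i = (word_of n \<pi>)!(i-1)"
proof -
  show "length (word_of n \<pi>) = n" by (simp add: word_of_def)
  have e: "set [1..<n+1] = {1..n}" by auto
  have inj: "inj_on \<pi> {1..n}" using assms permutes_inj_on by blast
  show "distinct (word_of n \<pi>)" unfolding word_of_def distinct_map using inj e by simp
  show "set (word_of n \<pi>) = {1..n}" unfolding word_of_def using permutes_image[OF assms] e by simp
  fix i assume "i \<in> {1..n}"
  then have "i - 1 < n" "Suc (i - 1) = i" by auto
  then show "\<pi> i = (word_of n \<pi>)!(i-1)" using word_of_nth[of "i-1" n \<pi>] by simp
qed

lemma pinv_perm: assumes "length xs = n" "distinct xs" "set xs = {1..n}"
  shows "pinv n xs permutes {1..n}"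
proof -
  define \<pi> where "\<pi> = pinv n xs"
  have bi: "bij_betw \<pi> {1..n} {1..n}"
  proof (rule bij_betw_imageI)
    show "inj_on \<pi> {1..n}"
    proof (rule inj_onI)
      fix x y assume xy: "x \<in> {1..n}" "y \<in> {1..n}" "\<pi> x = \<pi> y"
      then have "xs!(x-1) = xs!(y-1)" by (simp add: \<pi>_def pinv_def)
      moreover have "x - 1 < length xs" "y - 1 < length xs" using xy assms(1) by auto
      ultimately have "x - 1 = y - 1" using assms(2) by (simp add: nth_eq_iff_index_eq)
      moreover have "1 \<le> x" "1 \<le> y" using xy by auto
      ultimately show "x = y" by arith
    qed
    have "\<pi> ` {1..n} = (\<lambda>j. xs!j) ` {..<n}"
    proof
      show "\<pi> ` {1..n} \<subseteq> (\<lambda>j. xs!j) ` {..<n}"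
      proof
        fix y assume "y \<in> \<pi> ` {1..n}"
        then obtain i where i: "i \<in> {1..n}" "y = \<pi> i" by auto
        then have "y = xs!(i-1)" "i - 1 < n" by (auto simp: \<pi>_def pinv_def)
        then show "y \<in> (\<lambda>j. xs!j) ` {..<n}" by auto
      qed
      show "(\<lambda>j. xs!j) ` {..<n} \<subseteq> \<pi> ` {1..n}"
      proof
        fix y assume "y \<in> (\<lambda>j. xs!j) ` {..<n}"
        then obtain j where j: "j < n" "y = xs!j" by auto
        then have "\<pi> (Suc j) = y" by (simp add: \<pi>_def pinv_def)
        moreover have "Suc j \<in> {1..n}" using j by simp
        ultimately show "y \<in> \<pi> ` {1..n}" by (metis imageI)
      qed
    qed
    moreover have "(\<lambda>j. xs!j) ` {..<n} = set xs" using assms(1) by (auto simp: set_conv_nth)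
    ultimately show "\<pi> ` {1..n} = {1..n}" using assms(3) by simp
  qed
  have "\<And>x. x \<notin> {1..n} \<Longrightarrow> \<pi> x = x" unfolding \<pi>_def pinv_def by auto
  then show ?thesis using bij_imp_permutes[OF bi] unfolding \<pi>_def by blast
qed

lemma bij_word:
  "bij_betw (word_of n) {\<pi>. \<pi> permutes {1..n} \<and> avoids (word_of n \<pi>) [3,2,1] \<and> card (peaks n \<pi>) = k} (AL n k)"
proof (rule bij_betw_byWitness[where f'="pinv n"])
  show "\<forall>\<pi>\<in>{\<pi>. \<pi> permutes {1..n} \<and> avoids (word_of n \<pi>) [3,2,1] \<and> card (peaks n \<pi>) = k}. pinv n (word_of n \<pi>) = \<pi>"
    using pinv_word by blast
  show "\<forall>xs\<in>AL n k. word_of n (pinv n xs) = xs"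
    using word_pinv by (auto simp: AL_def)
  show "word_of n ` {\<pi>. \<pi> permutes {1..n} \<and> avoids (word_of n \<pi>) [3,2,1] \<and> card (peaks n \<pi>) = k} \<subseteq> AL n k"
  proof
    fix xs assume "xs \<in> word_of n ` {\<pi>. \<pi> permutes {1..n} \<and> avoids (word_of n \<pi>) [3,2,1] \<and> card (peaks n \<pi>) = k}"
    then obtain \<pi> where pp: "\<pi> permutes {1..n}" and av: "avoids (word_of n \<pi>) [3,2,1]"
      and pk: "card (peaks n \<pi>) = k" and xs: "xs = word_of n \<pi>" by auto
    note wp = word_props[OF pp, folded xs]
    have nd: "\<not> dec3 xs" using av unfolding xs[symmetric] avoids_iff .
    have "card (peaks n \<pi>) = des (tl xs)" by (rule peaks_des[OF wp(1,2) nd wp(4)])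
    then show "xs \<in> AL n k" using wp nd pk by (simp add: AL_def)
  qed
  show "pinv n ` AL n k \<subseteq> {\<pi>. \<pi> permutes {1..n} \<and> avoids (word_of n \<pi>) [3,2,1] \<and> card (peaks n \<pi>) = k}"
  proof
    fix \<pi> assume "\<pi> \<in> pinv n ` AL n k"
    then obtain xs where xs: "xs \<in> AL n k" and p: "\<pi> = pinv n xs" by auto
    have n1: "length xs = n" "distinct xs" "set xs = {1..n}" "\<not> dec3 xs" "des (tl xs) = k"
      using xs by (auto simp: AL_def)
    have w: "word_of n \<pi> = xs" using word_pinv[OF n1(1)] p by simp
    have pp: "\<pi> permutes {1..n}" using pinv_perm[OF n1(1,2,3)] p by simp
    have "card (peaks n \<pi>) = des (tl xs)"
      by (rule peaks_des[OF n1(1,2,4)]) (simp add: p pinv_def)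
    then have "card (peaks n \<pi>) = k" using n1 by simp
    moreover have "avoids (word_of n \<pi>) [3,2,1]" unfolding w avoids_iff using n1(4) .
    ultimately show "\<pi> \<in> {\<pi>. \<pi> permutes {1..n} \<and> avoids (word_of n \<pi>) [3,2,1] \<and> card (peaks n \<pi>) = k}"
      using pp by simp
  qed
qed

theorem theorem4p3:
  fixes n k :: nat
  assumes "n \<ge> 1"
  shows "card {w \<in> P2 (n - 1). avoids w [3,2,1] \<and> des w = k}
       = card {\<pi>. \<pi> permutes {1..n} \<and> avoids (word_of n \<pi>) [3,2,1] \<and> card (peaks n \<pi>) = k}"
proof -
  have e: "{w \<in> P2 (n - 1). avoids w [3,2,1] \<and> des w = k} = AW n k"
  proof
    show "{w \<in> P2 (n - 1). avoids w [3,2,1] \<and> des w = k} \<subseteq> AW n k"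
      using P2_sub avoids_iff unfolding AW_def by blast
    show "AW n k \<subseteq> {w \<in> P2 (n - 1). avoids w [3,2,1] \<and> des w = k}"
      using P2_sup avoids_iff unfolding AW_def by blast
  qed
  have "card (AW n k) = card (AL n k)"
    using bij_betw_same_card[OF bij_Phi[OF assms]] by simp
  also have "\<dots> = card {\<pi>. \<pi> permutes {1..n} \<and> avoids (word_of n \<pi>) [3,2,1] \<and> card (peaks n \<pi>) = k}"
    using bij_betw_same_card[OF bij_word] by simp
  finally show ?thesis using e by simp
qed

end
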